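(* Let $\mathcal{M}\subseteq 2^N$ be a matroid on $N=[n]$. Let the elements have distinct nonnegative weights with $w(\{1\})>\dots>w(\{n\})$. Let $k$ satisfy the standing assumptions below, let $p\in[\varepsilon(k),1/2]$, and let $r$ be a positive integer with $r\ge(1+\varepsilon(pk))pk$. Let $X_1,\dots,X_n\sim\mathrm{Ber}(2p)$ and $Y_1,\dots,Y_n\sim\mathrm{Ber}(1/2)$ be mutually independent. Set $S=\{i:X_i=1,Y_i=1\}$ and $T=\{i:X_i=1,Y_i=0\}$. Let $T^*\subseteq T$ be the set of elements of $T$ that improve $S$ with respect to $\mathcal{M}^r$, and let $S^*=\mathrm{OPT}(S,\mathcal{M}^r)$. Then $\mathbb{E}[w(T^* )]=\mathbb{E}[w(S^* )]$.
   Context: Matroids are identified with their families of independent sets. $\mathcal{M}^r$ is the $r$-fold union of $\mathcal{M}$: the family of sets partitionable into $r$ members of $\mathcal{M}$. $w(S)=\sum_{i\in S}w(\{i\})$. $\mathrm{OPT}(S,\mathcal{M}')=\arg\max_{U\subseteq S,\,U\in\mathcal{M}'}w(U)$, which is unique since weights are distinct. An element $i$ improves $S$ with respect to $\mathcal{M}'$ if $i\in\mathrm{OPT}(S\cup\{i\},\mathcal{M}')$. Standing assumptions: $\varepsilon(x)=C\sqrt{\log(n)/x}$, where $C$ is a sufficiently large absolute constant (e.g. $C\in[10,20]$, such that $\log(1/\varepsilon(k))-2$ is a positive integer), and $160^2\log n\le k\le n$. *)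

theory Defs
  imports "HOL-Probability.Probability"
begin

definition matroid :: "nat \<Rightarrow> nat set set \<Rightarrow> bool" where
  "matroid n M \<longleftrightarrow>
     (\<forall>A\<in>M. A \<subseteq> {1..n}) \<and>
     {} \<in> M \<and>
     (\<forall>A B. A \<in> M \<and> B \<subseteq> A \<longrightarrow> B \<in> M) \<and>
     (\<forall>A B. A \<in> M \<and> B \<in> M \<and> card A < card B \<longrightarrow> (\<exists>x\<in>B - A. insert x A \<in> M))"

definition matroid_union_pow :: "nat set set \<Rightarrow> nat \<Rightarrow> nat set set" where
  "matroid_union_pow M r =
     {A. \<exists>P :: nat \<Rightarrow> nat set. (\<forall>j<r. P j \<in> M) \<and> disjoint_family_on P {..<r}
                                \<and> A = (\<Union>j<r. P j)}"

definition wset :: "(nat \<Rightarrow> real) \<Rightarrow> nat set \<Rightarrow> real" where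
  "wset w S = (\<Sum>i\<in>S. w i)"

text \<open>OPT(S, M'): the maximum-weight member of M' contained in S.  Ties (only possible
  through an element of weight 0) are broken in favour of the larger set.\<close>
definition OPT :: "(nat \<Rightarrow> real) \<Rightarrow> nat set \<Rightarrow> nat set set \<Rightarrow> nat set" where
  "OPT w S M' = (THE U. U \<subseteq> S \<and> U \<in> M' \<and>
       (\<forall>V. V \<subseteq> S \<and> V \<in> M' \<longrightarrow> wset w V \<le> wset w U) \<and>
       (\<forall>V. V \<subseteq> S \<and> V \<in> M' \<and> wset w V = wset w U \<longrightarrow> card V \<le> card U))"

definition improves :: "(nat \<Rightarrow> real) \<Rightarrow> nat \<Rightarrow> nat set \<Rightarrow> nat set set \<Rightarrow> bool" where
  "improves w i S M' \<longleftrightarrow> i \<in> OPT w (insert i S) M'"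

definition eps :: "real \<Rightarrow> nat \<Rightarrow> real \<Rightarrow> real" where
  "eps C n x = C * sqrt (ln (real n) / x)"

end

theory Submission
  imports Defs
begin


lemma Mr_sub:
  assumes "matroid n M" "A \<in> matroid_union_pow M r"
  shows "A \<subseteq> {1..n}"
  using assms unfolding matroid_def matroid_union_pow_def by blast

lemma Mr_empty: "{} \<in> matroid_union_pow M r" if "matroid n M"
  using that unfolding matroid_def matroid_union_pow_def
  by (intro CollectI exI[of _ "\<lambda>_. {}"]) (auto simp: disjoint_family_on_def)

lemma Mr_her:
  assumes "matroid n M" "A \<in> matroid_union_pow M r" "B \<subseteq> A"
  shows "B \<in> matroid_union_pow M r"
proof -
  obtain P where P: "\<forall>j<r. P j \<in> M" "disjoint_family_on P {..<r}" "A = (\<Union>j<r. P j)"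
    using assms(2) unfolding matroid_union_pow_def by blast
  have "\<forall>j<r. P j \<inter> B \<in> M" using P(1) assms(1) unfolding matroid_def by blast
  moreover have "disjoint_family_on (\<lambda>j. P j \<inter> B) {..<r}"
    using P(2) unfolding disjoint_family_on_def by blast
  moreover have "B = (\<Union>j<r. P j \<inter> B)" using P(3) assms(3) by blast
  ultimately show ?thesis unfolding matroid_union_pow_def
    by (intro CollectI exI[of _ "\<lambda>j. P j \<inter> B"]) simp
qed

lemma Mr_aug:
  assumes mat: "matroid n M" and I: "I \<in> matroid_union_pow M r" and J: "J \<in> matroid_union_pow M r"
    and lt: "card I < card J"
  shows "\<exists>x\<in>J - I. insert x I \<in> matroid_union_pow M r"
proof (rule ccontr)
  assume nope: "\<not> ?thesis"
  have finM: "\<And>A. A \<in> M \<Longrightarrow> finite A" using mat unfolding matroid_def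
    by (meson finite_atLeastAtMost finite_subset)
  have herM: "\<And>A B. A \<in> M \<Longrightarrow> B \<subseteq> A \<Longrightarrow> B \<in> M" using mat unfolding matroid_def by blast
  have augM: "\<And>A B. A \<in> M \<Longrightarrow> B \<in> M \<Longrightarrow> card A < card B \<Longrightarrow> \<exists>x\<in>B - A. insert x A \<in> M"
    using mat unfolding matroid_def by blast
  obtain Q where Q: "\<forall>j<r. Q j \<in> M" "disjoint_family_on Q {..<r}" "J = (\<Union>j<r. Q j)"
    using J unfolding matroid_union_pow_def by blast
  define valid where "valid P \<longleftrightarrow> (\<forall>j<r. P j \<in> M) \<and> disjoint_family_on P {..<r} \<and> I = (\<Union>j<r. P j)" for P
  define ov where "ov P = (\<Sum>j<r. card (P j \<inter> Q j))" for P
  obtain P0 where "valid P0" using I unfolding matroid_union_pow_def valid_def by blast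
  have bnd: "\<forall>P. valid P \<longrightarrow> ov P < Suc (\<Sum>j<r. card (Q j))"
  proof (intro allI impI)
    fix P assume "valid P"
    have "ov P \<le> (\<Sum>j<r. card (Q j))" unfolding ov_def
      by (intro sum_mono card_mono) (use Q finM in auto)
    then show "ov P < Suc (\<Sum>j<r. card (Q j))" by simp
  qed
  obtain P where vP: "valid P" and maxP: "\<And>P'. valid P' \<Longrightarrow> ov P' \<le> ov P"
    using Lattices_Big.ex_has_greatest_nat[of valid P0 ov, OF \<open>valid P0\<close> bnd] by blast
  have P: "\<forall>j<r. P j \<in> M" "disjoint_family_on P {..<r}" "I = (\<Union>j<r. P j)"
    using vP unfolding valid_def by auto
  have cI: "card I = (\<Sum>j<r. card (P j))" unfolding P(3)
    by (rule card_UN_disjoint) (use P finM in \<open>auto simp: disjoint_family_on_def\<close>)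
  have cJ: "card J = (\<Sum>j<r. card (Q j))" unfolding Q(3)
    by (rule card_UN_disjoint) (use Q finM in \<open>auto simp: disjoint_family_on_def\<close>)
  obtain j where j: "j < r" "card (P j) < card (Q j)"
  proof (rule ccontr)
    assume "\<not> thesis"
    then have "\<forall>j<r. card (Q j) \<le> card (P j)" using that by force
    then have "(\<Sum>j<r. card (Q j)) \<le> (\<Sum>j<r. card (P j))" by (intro sum_mono) auto
    then show False using lt cI cJ by linarith
  qed
  obtain x where x: "x \<in> Q j - P j" "insert x (P j) \<in> M"
    using augM[of "P j" "Q j"] j P Q by blast
  have xJ: "x \<in> J" using x j Q(3) by blast
  show False
  proof (cases "x \<in> I")
    case False
    define P' where "P' = P(j := insert x (P j))"
    have "\<forall>l<r. P' l \<in> M" using P x unfolding P'_def by auto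
    moreover have "disjoint_family_on P' {..<r}"
      using P(2) False P(3) j(1) unfolding disjoint_family_on_def P'_def by auto
    moreover have "insert x I = (\<Union>l<r. P' l)"
      using P(3) j(1) unfolding P'_def by auto
    ultimately have "insert x I \<in> matroid_union_pow M r" unfolding matroid_union_pow_def by blast
    then show False using nope xJ False by blast
  next
    case True
    then obtain j' where j': "j' < r" "x \<in> P j'" using P(3) by blast
    have jj: "j' \<noteq> j" using j' x by blast
    have xnQ: "x \<notin> Q j'" using Q(2) x jj j j' unfolding disjoint_family_on_def by blast
    define P' where "P' = P(j := insert x (P j), j' := P j' - {x})"
    have "\<forall>l<r. P' l \<in> M" using P x herM unfolding P'_def by auto
    moreover have "disjoint_family_on P' {..<r}"
      using P(2) j' j(1) unfolding disjoint_family_on_def P'_def by auto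
    moreover have "I = (\<Union>l<r. P' l)"
      using P(3) j(1) j' jj x unfolding P'_def by auto
    ultimately have vP': "valid P'" unfolding valid_def by blast
    have "ov P < ov P'" unfolding ov_def
    proof (rule sum_strict_mono_ex1)
      show "\<forall>l\<in>{..<r}. card (P l \<inter> Q l) \<le> card (P' l \<inter> Q l)"
      proof
        fix l assume l: "l \<in> {..<r}"
        show "card (P l \<inter> Q l) \<le> card (P' l \<inter> Q l)"
        proof (cases "l = j'")
          case True
          then have "P' l \<inter> Q l = P l \<inter> Q l" using xnQ jj unfolding P'_def by auto
          then show ?thesis by simp
        next
          case False
          show ?thesis
          proof (cases "l = j")
            case True
            show ?thesis using False True unfolding P'_def
              by (intro card_mono) (use finM Q j in auto)
          qed (use False in \<open>simp add: P'_def\<close>)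
        qed
      qed
      have "card (P j \<inter> Q j) < card (P' j \<inter> Q j)"
        using jj x unfolding P'_def
        by (intro psubset_card_mono) (use finM Q j in auto)
      then show "\<exists>l\<in>{..<r}. card (P l \<inter> Q l) < card (P' l \<inter> Q l)" using j by blast
    qed simp
    then show False using maxP[OF vP'] by simp
  qed
qed



lemma extend_aug:
  fixes F :: "nat set set"
  assumes finF: "\<And>A. A \<in> F \<Longrightarrow> finite A"
    and aug: "\<And>A B. A \<in> F \<Longrightarrow> B \<in> F \<Longrightarrow> card A < card B \<Longrightarrow> \<exists>x\<in>B - A. insert x A \<in> F"
  shows "A \<in> F \<Longrightarrow> B \<in> F \<Longrightarrow> card A \<le> card B \<Longrightarrow>
     \<exists>C. A \<subseteq> C \<and> C \<subseteq> A \<union> B \<and> card C = card B \<and> C \<in> F"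
proof (induction "card B - card A" arbitrary: A)
  case 0
  then show ?case by (intro exI[of _ A]) auto
next
  case (Suc d)
  then have "card A < card B" by simp
  then obtain x where x: "x \<in> B - A" "insert x A \<in> F" using aug Suc.prems by blast
  have c: "card (insert x A) = Suc (card A)" using x finF Suc.prems by simp
  have "d = card B - card (insert x A)" using c Suc.hyps by simp
  moreover have le: "card (insert x A) \<le> card B" using c \<open>card A < card B\<close> by simp
  ultimately have "\<exists>C. insert x A \<subseteq> C \<and> C \<subseteq> insert x A \<union> B \<and> card C = card B \<and> C \<in> F"
    using Suc.hyps(1) x(2) Suc.prems(2) by blast
  then obtain C where "insert x A \<subseteq> C" "C \<subseteq> insert x A \<union> B" "card C = card B" "C \<in> F"
    by blast
  then show ?case using x by (intro exI[of _ C]) auto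
qed

lemma opt_core:
  fixes F :: "nat set set"
  assumes finF: "\<And>A. A \<in> F \<Longrightarrow> finite A"
    and her: "\<And>A B. A \<in> F \<Longrightarrow> B \<subseteq> A \<Longrightarrow> B \<in> F"
    and aug: "\<And>A B. A \<in> F \<Longrightarrow> B \<in> F \<Longrightarrow> card A < card B \<Longrightarrow> \<exists>x\<in>B - A. insert x A \<in> F"
    and wdec: "\<forall>i j. 1 \<le> i \<and> i < j \<and> j \<le> n \<longrightarrow> w i > w j"
    and S: "S \<subseteq> {1..n}"
    and U: "U \<subseteq> S" "U \<in> F" and U': "U' \<subseteq> S" "U' \<in> F"
    and opt: "\<forall>V. V \<subseteq> S \<and> V \<in> F \<longrightarrow> wset w V \<le> wset w U'"
    and cc: "card U = card U'"
    and e: "e \<in> U - U'" and emin: "\<forall>x\<in>(U - U') \<union> (U' - U). e \<le> x"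
  shows False
proof -
  define A where "A = insert e (U \<inter> {..<e})"
  have AU: "A \<subseteq> U" using e unfolding A_def by auto
  have AF: "A \<in> F" using her[OF U(2) AU] .
  have fU: "finite U" "finite U'" using finF U U' by auto
  have cle: "card A \<le> card U'" using card_mono[OF fU(1) AU] cc by simp
  have "\<exists>C. A \<subseteq> C \<and> C \<subseteq> A \<union> U' \<and> card C = card U' \<and> C \<in> F"
    apply (rule extend_aug[of F A U'])
    apply (fact finF) apply (fact aug) apply (fact AF) apply (fact U'(2)) by (fact cle)
  then obtain C where C: "A \<subseteq> C" "C \<subseteq> A \<union> U'" "card C = card U'" "C \<in> F"
    by blast
  have belowU: "U \<inter> {..<e} \<subseteq> U'"
  proof
    fix x assume x: "x \<in> U \<inter> {..<e}"
    show "x \<in> U'"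
    proof (rule ccontr)
      assume "x \<notin> U'"
      then have "e \<le> x" using emin x by blast
      then show False using x by auto
    qed
  qed
  have CU': "C - {e} \<subseteq> U'" using C(2) belowU unfolding A_def by auto
  have eC: "e \<in> C" using C(1) unfolding A_def by auto
  have fC: "finite C" using finF C(4) .
  have cCe: "card (C - {e}) = card U' - 1" using eC fC C(3) by simp
  have "card C > 0" using fC eC card_gt_0_iff by blast
  then have cU'pos: "card U' \<ge> 1" using C(3) by simp
  have "card (U' - (C - {e})) = 1"
    using card_Diff_subset[OF finite_subset[OF CU' fU(2)] CU'] cCe cU'pos by simp
  then obtain f where f: "U' - (C - {e}) = {f}" using card_1_singletonE by blast
  have fU': "f \<in> U'" and fnC: "f \<notin> C - {e}" using f by auto
  have fe: "f \<noteq> e" using fU' e by auto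
  have fnC': "f \<notin> C" using fnC fe by auto
  have ef: "e < f"
  proof (rule ccontr)
    assume "\<not> e < f"
    then have "f < e" using fe by simp
    show False
    proof (cases "f \<in> U")
      case True
      then have "f \<in> A" using \<open>f < e\<close> unfolding A_def by auto
      then show False using C(1) fnC' by auto
    next
      case False
      then have "f \<in> (U - U') \<union> (U' - U)" using fU' by blast
      then have "e \<le> f" using emin by blast
      then show False using \<open>f < e\<close> by simp
    qed
  qed
  have eS: "e \<in> {1..n}" "f \<in> {1..n}" using e U(1) fU' U'(1) S by auto
  have wef: "w f < w e" using wdec eS ef by auto
  have eqs: "U' - {f} = C - {e}" using f CU' by auto
  have "wset w U' = w f + wset w (U' - {f})" unfolding wset_def
    using sum.remove[OF fU(2) fU'] by simp
  moreover have "wset w C = w e + wset w (C - {e})" unfolding wset_def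
    using sum.remove[OF fC eC] by simp
  ultimately have "wset w U' < wset w C" using eqs wef by simp
  moreover have "C \<subseteq> S" using C(2) AU U(1) U'(1) by blast
  then have "wset w C \<le> wset w U'" using opt C(4) by blast
  ultimately show False by linarith
qed

lemma OPT_sub:
  fixes F :: "nat set set"
  assumes finF: "\<And>A. A \<in> F \<Longrightarrow> finite A"
    and emp: "{} \<in> F"
    and her: "\<And>A B. A \<in> F \<Longrightarrow> B \<subseteq> A \<Longrightarrow> B \<in> F"
    and aug: "\<And>A B. A \<in> F \<Longrightarrow> B \<in> F \<Longrightarrow> card A < card B \<Longrightarrow> \<exists>x\<in>B - A. insert x A \<in> F"
    and wdec: "\<forall>i j. 1 \<le> i \<and> i < j \<and> j \<le> n \<longrightarrow> w i > w j"
    and S: "S \<subseteq> {1..n}"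
  shows "OPT w S F \<subseteq> S"
proof -
  define Q where "Q U \<longleftrightarrow> U \<subseteq> S \<and> U \<in> F \<and>
       (\<forall>V. V \<subseteq> S \<and> V \<in> F \<longrightarrow> wset w V \<le> wset w U) \<and>
       (\<forall>V. V \<subseteq> S \<and> V \<in> F \<and> wset w V = wset w U \<longrightarrow> card V \<le> card U)" for U
  have fS: "finite S" using S finite_subset by blast
  define G where "G = {U. U \<subseteq> S \<and> U \<in> F}"
  have fG: "finite G" unfolding G_def using fS by (simp add: finite_subset[of _ "Pow S"] subset_eq)
  have neG: "{} \<in> G" unfolding G_def using emp by simp
  define m where "m = Max (wset w ` G)"
  define G' where "G' = {U\<in>G. wset w U = m}"
  have fG': "finite G'" using fG unfolding G'_def by simp
  have neG': "G' \<noteq> {}"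
  proof -
    have "m \<in> wset w ` G" unfolding m_def using fG neG by (intro Max_in) auto
    then show ?thesis unfolding G'_def by auto
  qed
  obtain U where U: "U \<in> G'" "card U = Max (card ` G')"
  proof -
    have "Max (card ` G') \<in> card ` G'" using fG' neG' by (intro Max_in) auto
    then show ?thesis using that by auto
  qed
  have QU: "Q U"
  proof -
    have "\<forall>V. V \<subseteq> S \<and> V \<in> F \<longrightarrow> wset w V \<le> wset w U"
      using U(1) fG unfolding G'_def G_def m_def by auto
    moreover have "\<forall>V. V \<subseteq> S \<and> V \<in> F \<and> wset w V = wset w U \<longrightarrow> card V \<le> card U"
      using U fG' unfolding G'_def G_def by auto
    ultimately show ?thesis using U(1) unfolding Q_def G'_def G_def by auto
  qed
  have uniq: "V = U" if QV: "Q V" for V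
  proof (rule ccontr)
    assume ne: "V \<noteq> U"
    have ww: "wset w V = wset w U" and cc: "card V = card U"
      using QV QU unfolding Q_def by (meson order_antisym)+
    have VS: "V \<subseteq> S" and VF: "V \<in> F" and optV: "\<forall>U. U \<subseteq> S \<and> U \<in> F \<longrightarrow> wset w U \<le> wset w V"
      using QV unfolding Q_def by blast+
    have US: "U \<subseteq> S" and UF: "U \<in> F" and optU: "\<forall>V. V \<subseteq> S \<and> V \<in> F \<longrightarrow> wset w V \<le> wset w U"
      using QU unfolding Q_def by blast+
    define D where "D = (V - U) \<union> (U - V)"
    have fD: "finite D" "D \<noteq> {}" unfolding D_def using QV QU fS ne unfolding Q_def
      by (auto intro: finite_subset)
    define e where "e = Min D"
    have eD: "e \<in> D" unfolding e_def using fD by simp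
    have emin: "\<forall>x\<in>D. e \<le> x" unfolding e_def using fD by simp
    show False
    proof (cases "e \<in> V - U")
      case True
      show False
        apply (rule opt_core[of F n w S V U e])
        apply (fact finF) apply (fact her) apply (fact aug) apply (fact wdec) apply (fact S)
        apply (fact VS) apply (fact VF) apply (fact US) apply (fact UF) apply (fact optU) apply (fact cc)
        apply (fact True) using emin unfolding D_def by blast
    next
      case False
      then have "e \<in> U - V" using eD unfolding D_def by auto
      show False
        apply (rule opt_core[of F n w S U V e])
        apply (fact finF) apply (fact her) apply (fact aug) apply (fact wdec) apply (fact S)
        apply (fact US) apply (fact UF) apply (fact VS) apply (fact VF) apply (fact optV) using cc apply simp
        apply (fact \<open>e \<in> U - V\<close>) using emin unfolding D_def by blast
    qed
  qed
  have "OPT w S F = (THE U. Q U)" unfolding OPT_def Q_def by (rule refl)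
  also have "(THE U. Q U) = U" by (rule the_equality) (use QU uniq in blast)+
  finally show ?thesis using QU unfolding Q_def by blast
qed



lemma flip_pmf:
  fixes q :: real and n i :: nat
  assumes i: "i \<in> {1..n}"
  defines "D \<equiv> pair_pmf (Pi_pmf {1..n} False (\<lambda>_. bernoulli_pmf q)) (Pi_pmf {1..n} False (\<lambda>_. bernoulli_pmf (1/2)))"
  shows "map_pmf (\<lambda>(X, Y). (X, Y(i := \<not> Y i))) D = D"
proof -
  define h where "h = (\<lambda>(X::nat\<Rightarrow>bool, Y::nat\<Rightarrow>bool). (X, Y(i := \<not> Y i)))"
  have hh: "h (h z) = z" for z unfolding h_def by (cases z) auto
  have inj: "inj h" by (metis hh injI)
  have pB: "pmf (Pi_pmf {1..n} False (\<lambda>_. bernoulli_pmf (1/2))) (Y(i := \<not> Y i))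
        = pmf (Pi_pmf {1..n} False (\<lambda>_. bernoulli_pmf (1/2))) Y" for Y :: "nat \<Rightarrow> bool"
  proof -
    have eq: "(\<forall>x. x \<notin> {1..n} \<longrightarrow> (Y(i := \<not> Y i)) x = False) = (\<forall>x. x \<notin> {1..n} \<longrightarrow> Y x = False)"
      using i by auto
    have c: "pmf (bernoulli_pmf (1/2)) b = 1/2" for b by (cases b) auto
    show ?thesis by (simp only: pmf_Pi[OF finite_atLeastAtMost] eq c)
  qed
  have "pmf (map_pmf h D) z = pmf D z" for z
  proof -
    have "pmf (map_pmf h D) z = pmf (map_pmf h D) (h (h z))" by (simp add: hh)
    also have "\<dots> = pmf D (h z)" by (rule pmf_map_inj'[OF inj])
    also have "\<dots> = pmf D z" unfolding D_def h_def
      by (cases z) (simp only: pmf_pair case_prod_conv pB)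
    finally show ?thesis .
  qed
  then show ?thesis unfolding h_def[symmetric] by (intro pmf_eqI) simp
qed

lemma prob_part:
  fixes F :: "nat set set" and w :: "nat \<Rightarrow> real" and q :: real
  assumes optsub: "\<And>S. S \<subseteq> {1..n} \<Longrightarrow> OPT w S F \<subseteq> S"
  shows "measure_pmf.expectation (pair_pmf (Pi_pmf {1..n} False (\<lambda>_. bernoulli_pmf q)) (Pi_pmf {1..n} False (\<lambda>_. bernoulli_pmf (1/2))))
      (\<lambda>(X, Y). wset w {i\<in>{i\<in>{1..n}. X i \<and> \<not> Y i}. improves w i {i\<in>{1..n}. X i \<and> Y i} F})
    = measure_pmf.expectation (pair_pmf (Pi_pmf {1..n} False (\<lambda>_. bernoulli_pmf q)) (Pi_pmf {1..n} False (\<lambda>_. bernoulli_pmf (1/2))))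
      (\<lambda>(X, Y). wset w (OPT w {i\<in>{1..n}. X i \<and> Y i} F))"
proof -
  define D where "D = pair_pmf (Pi_pmf {1..n} False (\<lambda>_. bernoulli_pmf q)) (Pi_pmf {1..n} False (\<lambda>_. bernoulli_pmf (1/2)))"
  define SS where "SS = (\<lambda>(X::nat\<Rightarrow>bool) (Y::nat\<Rightarrow>bool). {i\<in>{1..n}. X i \<and> Y i})"
  define TT where "TT = (\<lambda>(X::nat\<Rightarrow>bool) (Y::nat\<Rightarrow>bool). {i\<in>{i\<in>{1..n}. X i \<and> \<not> Y i}. improves w i (SS X Y) F})"
  have fin: "finite (set_pmf D)" unfolding D_def
    by (simp add: set_Pi_pmf finite_PiE_dflt)
  have integ: "integrable (measure_pmf D) f" for f :: "_ \<Rightarrow> real"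
    by (rule integrable_measure_pmf_finite[OF fin])
  define gT where "gT = (\<lambda>i z. if i \<in> TT (fst z) (snd z) then w i else 0)"
  define gS where "gS = (\<lambda>i z. if i \<in> OPT w (SS (fst z) (snd z)) F then w i else 0)"
  have L: "(\<lambda>(X, Y). wset w (TT X Y)) = (\<lambda>z. \<Sum>i\<in>{1..n}. gT i z)"
  proof
    fix z :: "(nat \<Rightarrow> bool) \<times> (nat \<Rightarrow> bool)"
    have sub: "TT (fst z) (snd z) \<subseteq> {1..n}" unfolding TT_def by auto
    have "wset w (TT (fst z) (snd z)) = (\<Sum>i\<in>{1..n} \<inter> TT (fst z) (snd z). w i)"
      unfolding wset_def using sub by (simp add: Int_absorb1)
    also have "\<dots> = (\<Sum>i\<in>{1..n}. gT i z)" unfolding gT_def by (rule sum.inter_restrict) simp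
    finally show "(case z of (X, Y) \<Rightarrow> wset w (TT X Y)) = (\<Sum>i\<in>{1..n}. gT i z)"
      by (cases z) simp
  qed
  have R: "(\<lambda>(X, Y). wset w (OPT w (SS X Y) F)) = (\<lambda>z. \<Sum>i\<in>{1..n}. gS i z)"
  proof
    fix z :: "(nat \<Rightarrow> bool) \<times> (nat \<Rightarrow> bool)"
    have ss: "SS (fst z) (snd z) \<subseteq> {1..n}" unfolding SS_def by auto
    have sub: "OPT w (SS (fst z) (snd z)) F \<subseteq> {1..n}"
      using optsub[OF ss] ss by blast
    have "wset w (OPT w (SS (fst z) (snd z)) F) = (\<Sum>i\<in>{1..n} \<inter> OPT w (SS (fst z) (snd z)) F. w i)"
      unfolding wset_def using sub by (simp add: Int_absorb1)
    also have "\<dots> = (\<Sum>i\<in>{1..n}. gS i z)" unfolding gS_def by (rule sum.inter_restrict) simp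
    finally show "(case z of (X, Y) \<Rightarrow> wset w (OPT w (SS X Y) F)) = (\<Sum>i\<in>{1..n}. gS i z)"
      by (cases z) simp
  qed
  have each: "measure_pmf.expectation D (gT i) = measure_pmf.expectation D (gS i)" if i: "i \<in> {1..n}" for i
  proof -
    define h where "h = (\<lambda>(X::nat\<Rightarrow>bool, Y::nat\<Rightarrow>bool). (X, Y(i := \<not> Y i)))"
    have mp: "map_pmf h D = D" unfolding h_def D_def by (rule flip_pmf[OF i])
    have pt: "gT i z = gS i (h z)" for z
    proof -
      obtain X Y where z: "z = (X, Y)" by (cases z)
      have "(i \<in> TT X Y) = (i \<in> OPT w (SS X (Y(i := \<not> Y i))) F)"
      proof (cases "Y i")
        case True
        have "i \<notin> SS X (Y(i := \<not> Y i))" unfolding SS_def using True by auto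
        moreover have "SS X (Y(i := \<not> Y i)) \<subseteq> {1..n}" unfolding SS_def by auto
        ultimately have "i \<notin> OPT w (SS X (Y(i := \<not> Y i))) F" using optsub by blast
        moreover have "i \<notin> TT X Y" unfolding TT_def using True by auto
        ultimately show ?thesis by simp
      next
        case False
        show ?thesis
        proof (cases "X i")
          case True
          have "SS X (Y(i := \<not> Y i)) = insert i (SS X Y)"
            unfolding SS_def using True False i by auto
          then show ?thesis unfolding TT_def improves_def using True False i by auto
        next
          case XF: False
          have "i \<notin> SS X (Y(i := \<not> Y i))" unfolding SS_def using XF by auto
          moreover have "SS X (Y(i := \<not> Y i)) \<subseteq> {1..n}" unfolding SS_def by auto
          ultimately have "i \<notin> OPT w (SS X (Y(i := \<not> Y i))) F" using optsub by blast
          moreover have "i \<notin> TT X Y" unfolding TT_def using XF by auto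
          ultimately show ?thesis by simp
        qed
      qed
      then show ?thesis unfolding gT_def gS_def h_def z by simp
    qed
    have "measure_pmf.expectation D (gT i) = measure_pmf.expectation D (\<lambda>z. gS i (h z))"
      by (rule arg_cong[where f="measure_pmf.expectation D"]) (rule ext, rule pt)
    also have "\<dots> = measure_pmf.expectation (map_pmf h D) (gS i)" by simp
    also have "\<dots> = measure_pmf.expectation D (gS i)" by (simp only: mp)
    finally show ?thesis .
  qed
  have "measure_pmf.expectation D (\<lambda>(X, Y). wset w (TT X Y)) = (\<Sum>i\<in>{1..n}. measure_pmf.expectation D (gT i))"
    unfolding L by (rule Bochner_Integration.integral_sum) (rule integ)
  also have "\<dots> = (\<Sum>i\<in>{1..n}. measure_pmf.expectation D (gS i))" by (rule sum.cong) (auto simp: each)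
  also have "\<dots> = measure_pmf.expectation D (\<lambda>(X, Y). wset w (OPT w (SS X Y) F))"
    unfolding R by (rule Bochner_Integration.integral_sum[symmetric]) (rule integ)
  finally show ?thesis unfolding D_def TT_def SS_def .
qed


theorem lemma3:
  fixes n k r :: nat and M :: "nat set set" and w :: "nat \<Rightarrow> real" and p C :: real
  assumes "matroid n M"
    and "\<forall>i\<in>{1..n}. w i \<ge> 0"
    and "\<forall>i j. 1 \<le> i \<and> i < j \<and> j \<le> n \<longrightarrow> w i > w j"
    and "10 \<le> C" and "C \<le> 20"
    and "\<exists>m::nat. m > 0 \<and> ln (1 / eps C n (real k)) - 2 = real m"
    and "160^2 * ln (real n) \<le> real k" and "k \<le> n"
    and "eps C n (real k) \<le> p" and "p \<le> 1/2"
    and "r > 0" and "real r \<ge> (1 + eps C n (p * real k)) * (p * real k)"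
  shows
    "let D = pair_pmf (Pi_pmf {1..n} False (\<lambda>_. bernoulli_pmf (2 * p)))
                      (Pi_pmf {1..n} False (\<lambda>_. bernoulli_pmf (1/2)));
         Mr = matroid_union_pow M r;
         S = (\<lambda>X Y. {i\<in>{1..n}. X i \<and> Y i});
         T = (\<lambda>X Y. {i\<in>{1..n}. X i \<and> \<not> Y i});
         Tstar = (\<lambda>X Y. {i\<in>T X Y. improves w i (S X Y) Mr});
         Sstar = (\<lambda>X Y. OPT w (S X Y) Mr)
     in measure_pmf.expectation D (\<lambda>(X, Y). wset w (Tstar X Y))
        = measure_pmf.expectation D (\<lambda>(X, Y). wset w (Sstar X Y))"
  proof -
  have optsub: "OPT w S (matroid_union_pow M r) \<subseteq> S" if S: "S \<subseteq> {1..n}" for S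
    apply (rule OPT_sub[where F="matroid_union_pow M r" and n=n and w=w and S=S])
    using Mr_sub[OF assms(1)] apply (meson finite_atLeastAtMost finite_subset)
    apply (rule Mr_empty[OF assms(1)])
    apply (erule (1) Mr_her[OF assms(1)])
    apply (erule (2) Mr_aug[OF assms(1)])
    apply (fact assms(3))
    by (fact S)
  show ?thesis unfolding Let_def by (rule prob_part) (rule optsub)
qed

end
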